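(* Let $C$ be a commutative ring, let $X,Y$ be disjoint sets with $|X|=|Y|=n$, and let $S_{2n}$ be the symmetric group on $X\cup Y$. For $Z\subseteq X$ put $P(Z)=\sum_{\sigma\in S_{2n},\ \sigma(Z)\subseteq Y}\operatorname{sgn}(\sigma)\,\sigma\in C[S_{2n}]$. Then $$\sum_{Z\subseteq X}(-1)^{|Z|}P(Z)=\sum_{\sigma\in S_{2n},\ \sigma(X)=X}\operatorname{sgn}(\sigma)\,\sigma.$$ *)

theory Defs
  imports "HOL-Combinatorics.Permutations"
begin

text \<open>An element of the group ring C[S_U] (U finite) is represented by its coefficient
  function, a map from permutations (functions 'a => 'a permuting U) to C.
  signed_sum A is the coefficient function of the element  sum over sigma in A of sgn(sigma) sigma.\<close>

definition signed_sum :: "('a \<Rightarrow> 'a) set \<Rightarrow> ('a \<Rightarrow> 'a) \<Rightarrow> 'c::comm_ring_1" where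
  "signed_sum A = (\<lambda>\<tau>. if \<tau> \<in> A then of_int (sign \<tau>) else 0)"

definition P_elt :: "'a set \<Rightarrow> 'a set \<Rightarrow> 'a set \<Rightarrow> ('a \<Rightarrow> 'a) \<Rightarrow> 'c::comm_ring_1" where
  "P_elt X Y Z = signed_sum {\<sigma>. \<sigma> permutes (X \<union> Y) \<and> \<sigma> ` Z \<subseteq> Y}"

end

theory Submission
  imports Defs
begin

lemma alt_pow_sum:
  assumes "finite W"
  shows "(\<Sum>Z\<in>Pow W. (-1) ^ card Z :: 'c::comm_ring_1) = (if W = {} then 1 else 0)"
proof -
  have "(\<Prod>x\<in>W. (1::'c) - 1) = (\<Sum>Z\<in>Pow W. (-1) ^ card Z * (\<Prod>x\<in>Z. 1) * (\<Prod>x\<in>W-Z. 1))"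
    by (rule prod_diff_conv_sum) (fact assms)
  then have "(\<Sum>Z\<in>Pow W. (-1) ^ card Z :: 'c) = 0 ^ card W" by simp
  moreover have "W \<noteq> {} \<Longrightarrow> card W \<noteq> 0" using assms by simp
  ultimately show ?thesis by (auto simp: zero_power)
qed

theorem proposition2p37:
  fixes X Y :: "'a set" and n :: nat
  assumes "finite X" "finite Y" "X \<inter> Y = {}" "card X = n" "card Y = n"
  shows "(\<lambda>\<tau>. \<Sum>Z\<in>Pow X. (-1) ^ card Z * (P_elt X Y Z \<tau> :: 'c::comm_ring_1))
         = signed_sum {\<sigma>. \<sigma> permutes (X \<union> Y) \<and> \<sigma> ` X = X}"
proof
  fix \<tau> :: "'a \<Rightarrow> 'a"
  show "(\<Sum>Z\<in>Pow X. (-1) ^ card Z * (P_elt X Y Z \<tau> :: 'c))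
         = signed_sum {\<sigma>. \<sigma> permutes (X \<union> Y) \<and> \<sigma> ` X = X} \<tau>"
  proof (cases "\<tau> permutes (X \<union> Y)")
    case False
    then show ?thesis by (simp add: P_elt_def signed_sum_def)
  next
    case True
    define W where "W = {x\<in>X. \<tau> x \<in> Y}"
    have fW: "finite W" using assms(1) W_def by simp
    have "(\<Sum>Z\<in>Pow X. (-1) ^ card Z * (P_elt X Y Z \<tau> :: 'c))
        = (\<Sum>Z\<in>Pow X. if Z \<subseteq> W then (-1) ^ card Z * of_int (sign \<tau>) else 0)"
      by (rule sum.cong) (auto simp: P_elt_def signed_sum_def True W_def)
    also have "\<dots> = (\<Sum>Z\<in>Pow W. (-1) ^ card Z * of_int (sign \<tau>))"
      by (subst sum.inter_filter[symmetric]) (auto simp: assms(1) W_def intro!: sum.cong)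
    also have "\<dots> = (if W = {} then of_int (sign \<tau>) else 0)"
      using alt_pow_sum[OF fW, where 'c='c] by (simp add: sum_distrib_right[symmetric])
    also have "\<dots> = signed_sum {\<sigma>. \<sigma> permutes (X \<union> Y) \<and> \<sigma> ` X = X} \<tau>"
    proof -
      have inj: "inj_on \<tau> X" using permutes_inj[OF True] by (auto intro: inj_on_subset)
      have img: "\<tau> ` X \<subseteq> X \<union> Y" using permutes_image[OF True] by auto
      have "W = {} \<longleftrightarrow> \<tau> ` X = X"
      proof
        assume "W = {}"
        then have sub: "\<tau> ` X \<subseteq> X" using img W_def by blast
        moreover have "card (\<tau> ` X) = card X" using card_image[OF inj] .
        ultimately show "\<tau> ` X = X" using assms(1) by (simp add: card_subset_eq)
      next
        assume "\<tau> ` X = X" then show "W = {}" using assms(3) W_def by auto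
      qed
      then show ?thesis by (simp add: signed_sum_def True)
    qed
    finally show ?thesis .
  qed
qed

end
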